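(* Consider the averaged boost converter $-L\dot I=(1-u)V-V_s$, $C\dot V=(1-u)I-GV$ with scalar constants $L>0$, $C>0$, $G\ge0$, $V_s\in\mathbb{R}$, extended by $\dot u=\upsilon$ (state $(I,V,\dot I,\dot V,u)$, input $\upsilon$). Then this system is passive with respect to the storage function $S=\tfrac12L\dot I^2+\tfrac12C\dot V^2$ and the port-variables $\dot u$ and $\dot IV-\dot VI$, i.e. $\dot S\le\dot u(\dot IV-\dot VI)$.
   Context: $I$ is the inductor current, $V$ the capacitor voltage, $u\in[0,1]$ the duty cycle (averaged model). *)

theory Defs
  imports Complex_Main
begin

end

theory Submission
  imports Defs
begin

theorem lemma3:
  fixes L C G Vs :: real
    and T :: "real set"
    and I V u Id Vd Idd Vdd ups :: "real \<Rightarrow> real"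
  assumes L: "L > 0" and C: "C > 0" and G: "G \<ge> 0"
    and T: "open T"
    and dI: "\<And>t. t \<in> T \<Longrightarrow> (I has_real_derivative Id t) (at t)"
    and dV: "\<And>t. t \<in> T \<Longrightarrow> (V has_real_derivative Vd t) (at t)"
    and dId: "\<And>t. t \<in> T \<Longrightarrow> (Id has_real_derivative Idd t) (at t)"
    and dVd: "\<And>t. t \<in> T \<Longrightarrow> (Vd has_real_derivative Vdd t) (at t)"
    and du: "\<And>t. t \<in> T \<Longrightarrow> (u has_real_derivative ups t) (at t)"
    and eqI: "\<And>t. t \<in> T \<Longrightarrow> - L * Id t = (1 - u t) * V t - Vs"
    and eqV: "\<And>t. t \<in> T \<Longrightarrow> C * Vd t = (1 - u t) * I t - G * V t"
  shows "\<forall>t\<in>T. \<exists>Sd.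
           ((\<lambda>s. 1/2 * L * (Id s)\<^sup>2 + 1/2 * C * (Vd s)\<^sup>2) has_real_derivative Sd) (at t)
           \<and> Sd \<le> ups t * (Id t * V t - Vd t * I t)"
proof
  fix t assume t: "t \<in> T"
  have d1: "((\<lambda>s. - L * Id s) has_real_derivative - L * Idd t) (at t)"
    using dId[OF t] by (auto intro!: derivative_eq_intros)
  have d1': "((\<lambda>s. (1 - u s) * V s - Vs) has_real_derivative - L * Idd t) (at t)"
    by (rule has_field_derivative_transform_within_open[OF d1 T t]) (metis eqI mult_minus_left)
  have d1'': "((\<lambda>s. (1 - u s) * V s - Vs) has_real_derivative (- ups t) * V t + (1 - u t) * Vd t) (at t)"
    using du[OF t] dV[OF t] by (auto intro!: derivative_eq_intros)
  have e1: "- L * Idd t = (- ups t) * V t + (1 - u t) * Vd t"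
    using DERIV_unique[OF d1' d1''] .
  have d2: "((\<lambda>s. C * Vd s) has_real_derivative C * Vdd t) (at t)"
    using dVd[OF t] by (auto intro!: derivative_eq_intros)
  have d2': "((\<lambda>s. (1 - u s) * I s - G * V s) has_real_derivative C * Vdd t) (at t)"
    by (rule has_field_derivative_transform_within_open[OF d2 T t]) (simp add: eqV)
  have d2'': "((\<lambda>s. (1 - u s) * I s - G * V s) has_real_derivative (- ups t) * I t + (1 - u t) * Id t - G * Vd t) (at t)"
    using du[OF t] dI[OF t] dV[OF t] by (auto intro!: derivative_eq_intros)
  have e2: "C * Vdd t = (- ups t) * I t + (1 - u t) * Id t - G * Vd t"
    using DERIV_unique[OF d2' d2''] .
  have dS: "((\<lambda>s. 1/2 * L * (Id s)\<^sup>2 + 1/2 * C * (Vd s)\<^sup>2) has_real_derivative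
      Id t * (L * Idd t) + Vd t * (C * Vdd t)) (at t)"
    using dId[OF t] dVd[OF t] by (auto intro!: derivative_eq_intros simp: power2_eq_square algebra_simps)
  have eq: "Id t * (L * Idd t) + Vd t * (C * Vdd t) = ups t * (Id t * V t - Vd t * I t) - G * (Vd t)\<^sup>2"
  proof -
    have "L * Idd t = ups t * V t - (1 - u t) * Vd t" using e1 by linarith
    then have "Id t * (L * Idd t) + Vd t * (C * Vdd t) = Id t * (ups t * V t - (1 - u t) * Vd t)
       + Vd t * ((- ups t) * I t + (1 - u t) * Id t - G * Vd t)" using e2 by simp
    then show ?thesis by (simp add: power2_eq_square algebra_simps)
  qed
  have "G * (Vd t)\<^sup>2 \<ge> 0" using G by simp
  then show "\<exists>Sd. ((\<lambda>s. 1/2 * L * (Id s)\<^sup>2 + 1/2 * C * (Vd s)\<^sup>2) has_real_derivative Sd) (at t)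
           \<and> Sd \<le> ups t * (Id t * V t - Vd t * I t)"
    using dS eq by (intro exI[of _ "Id t * (L * Idd t) + Vd t * (C * Vdd t)"]) auto
qed

end
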